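(* Let $m$ be a non-negative integer and let $S=(u_0,\dots,u_{n-1})$ be an antisymmetric finite sequence of elements of $\mathbb{Z}/m\mathbb{Z}$. Then the Steinhaus triangle $\Delta S$ is balanced if and only if the triangle $\nabla S$ is balanced.
   Context: $S$ is antisymmetric if $u_{n-1-j}=-u_j$ for all $j\in\{0,\dots,n-1\}$. The Steinhaus triangle $\Delta S$ is $(a_{i,j})_{i,j\ge0,\,i+j<n}$ with $a_{0,j}=u_j$ and $a_{i,j}=a_{i-1,j}+a_{i-1,j+1}$ for $i\ge1$; the triangle $\nabla S$ is $(b_{i,j})_{i,j\ge0,\,i+j<n}$ with $b_{0,j}=u_j$ and $b_{i,j}=-b_{i-1,j}-b_{i-1,j+1}$ for $i\ge1$. A triangle is balanced if every element of $\mathbb{Z}/m\mathbb{Z}$ occurs the same number of times among its entries. *)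

theory Defs
  imports Main
begin

text \<open>Elements of Z/mZ are represented by their canonical integer representatives,
  i.e. the integers x with x mod m = x ({0..m-1} for m > 0, all of Z for m = 0).\<close>

definition residues :: "nat \<Rightarrow> int set" where
  "residues m = {x. x mod int m = x}"

fun steinhaus :: "nat \<Rightarrow> (nat \<Rightarrow> int) \<Rightarrow> nat \<Rightarrow> nat \<Rightarrow> int" where
  "steinhaus m u 0 j = u j mod int m"
| "steinhaus m u (Suc i) j = (steinhaus m u i j + steinhaus m u i (Suc j)) mod int m"

fun nabla :: "nat \<Rightarrow> (nat \<Rightarrow> int) \<Rightarrow> nat \<Rightarrow> nat \<Rightarrow> int" where
  "nabla m u 0 j = u j mod int m"
| "nabla m u (Suc i) j = (- nabla m u i j - nabla m u i (Suc j)) mod int m"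

definition occ :: "nat \<Rightarrow> (nat \<Rightarrow> nat \<Rightarrow> int) \<Rightarrow> int \<Rightarrow> nat" where
  "occ n T x = card {(i, j). i + j < n \<and> T i j = x}"

definition balanced :: "nat \<Rightarrow> nat \<Rightarrow> (nat \<Rightarrow> nat \<Rightarrow> int) \<Rightarrow> bool" where
  "balanced m n T \<longleftrightarrow> (\<forall>x\<in>residues m. \<forall>y\<in>residues m. occ n T x = occ n T y)"

definition antisymmetric :: "nat \<Rightarrow> nat \<Rightarrow> (nat \<Rightarrow> int) \<Rightarrow> bool" where
  "antisymmetric m n u \<longleftrightarrow> (\<forall>j<n. u (n - 1 - j) = (- u j) mod int m)"

end

theory Submission
  imports Defs
begin

lemma st_anti:
  assumes anti: "antisymmetric m n u"
  shows "i + j < n \<Longrightarrow> steinhaus m u i (n - 1 - i - j) = (- steinhaus m u i j) mod int m"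
proof (induction i arbitrary: j)
  case 0
  then have "u (n - 1 - j) = (- u j) mod int m" using anti unfolding antisymmetric_def by auto
  then show ?case by (simp add: mod_simps)
next
  case (Suc i)
  have e1: "steinhaus m u i (n - 1 - i - (Suc j)) = (- steinhaus m u i (Suc j)) mod int m"
    using Suc.IH[of "Suc j"] Suc.prems by simp
  have e2: "steinhaus m u i (n - 1 - i - j) = (- steinhaus m u i j) mod int m"
    using Suc.IH[of j] Suc.prems by simp
  have idx: "Suc (n - 1 - Suc i - j) = n - 1 - i - j" "n - 1 - Suc i - j = n - 1 - i - Suc j"
    using Suc.prems by auto
  have "steinhaus m u (Suc i) (n - 1 - Suc i - j)
      = (steinhaus m u i (n - 1 - i - Suc j) + steinhaus m u i (n - 1 - i - j)) mod int m"
    using idx by simp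
  also have "\<dots> = ((- steinhaus m u i (Suc j)) mod int m + (- steinhaus m u i j) mod int m) mod int m"
    using e1 e2 by simp
  also have "\<dots> = (- (steinhaus m u i j + steinhaus m u i (Suc j))) mod int m"
    by (simp add: mod_simps algebra_simps)
  also have "\<dots> = (- steinhaus m u (Suc i) j) mod int m"
    by (simp add: mod_simps)
  finally show ?case .
qed

lemma negmod: "(- (a mod k) - b) mod k = (- a - b) mod (k::int)"
proof -
  have "(- (a mod k) - b) mod k = ((- (a mod k)) mod k - b) mod k" by (simp add: mod_diff_left_eq)
  also have "\<dots> = ((- a) mod k - b) mod k" by (simp add: mod_minus_eq)
  also have "\<dots> = (- a - b) mod k" by (simp add: mod_diff_left_eq)
  finally show ?thesis .
qed

lemma nabla_st: "nabla m u i j = ((-1)^i * steinhaus m u i j) mod int m"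
proof (induction i arbitrary: j)
  case 0
  then show ?case by simp
next
  case (Suc i)
  have "nabla m u (Suc i) j = (- (((-1)^i * steinhaus m u i j) mod int m)
         - ((-1)^i * steinhaus m u i (Suc j)) mod int m) mod int m"
    using Suc.IH by simp
  also have "\<dots> = ((-1)^(Suc i) * (steinhaus m u i j + steinhaus m u i (Suc j))) mod int m"
    by (simp add: negmod mod_simps algebra_simps)
  also have "\<dots> = ((-1)^(Suc i) * ((steinhaus m u i j + steinhaus m u i (Suc j)) mod int m)) mod int m"
    by (metis mod_mult_right_eq)
  finally show ?case by simp
qed

lemma occ_eq:
  assumes anti: "antisymmetric m n u"
  shows "occ n (nabla m u) x = occ n (steinhaus m u) x"
proof -
  define f where "f = (\<lambda>(i::nat, j::nat). if even i then (i, j) else (i, n - 1 - i - j))"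
  have ff: "i + j < n \<Longrightarrow> f (f (i, j)) = (i, j)" for i j by (auto simp: f_def)
  have fr: "i + j < n \<Longrightarrow> fst (f (i,j)) = i \<and> i + snd (f (i,j)) < n" for i j by (auto simp: f_def)
  have key: "i + j < n \<Longrightarrow> nabla m u i j = steinhaus m u i (snd (f (i, j)))" for i j
  proof -
    assume h: "i + j < n"
    show ?thesis
    proof (cases "even i")
      case True
      then show ?thesis by (simp add: f_def nabla_st mod_mod_trivial)
        (metis Defs.steinhaus.elims mod_mod_trivial)
    next
      case False
      then show ?thesis using st_anti[OF anti h] by (simp add: f_def nabla_st)
    qed
  qed
  have "bij_betw f {(i, j). i + j < n \<and> nabla m u i j = x} {(i, j). i + j < n \<and> steinhaus m u i j = x}"
  proof (rule bij_betw_byWitness[where f' = f])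
    show "\<forall>a\<in>{(i, j). i + j < n \<and> nabla m u i j = x}. f (f a) = a" using ff by auto
    show "\<forall>a'\<in>{(i, j). i + j < n \<and> steinhaus m u i j = x}. f (f a') = a'" using ff by auto
    show "f ` {(i, j). i + j < n \<and> nabla m u i j = x} \<subseteq> {(i, j). i + j < n \<and> steinhaus m u i j = x}"
    proof (rule image_subsetI)
      fix p assume "p \<in> {(i, j). i + j < n \<and> nabla m u i j = x}"
      then obtain i j where p: "p = (i,j)" and h: "i + j < n" "nabla m u i j = x" by auto
      obtain a b where fab: "f (i,j) = (a,b)" by force
      have "a + b < n" "a = i" using fr[OF h(1)] fab by auto
      moreover have "steinhaus m u a b = x" using key[OF h(1)] h(2) fab \<open>a = i\<close> by simp
      ultimately show "f p \<in> {(i, j). i + j < n \<and> steinhaus m u i j = x}" using p fab by simp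
    qed
    show "f ` {(i, j). i + j < n \<and> steinhaus m u i j = x} \<subseteq> {(i, j). i + j < n \<and> nabla m u i j = x}"
    proof (rule image_subsetI)
      fix p assume "p \<in> {(i, j). i + j < n \<and> steinhaus m u i j = x}"
      then obtain i j where p: "p = (i,j)" and h: "i + j < n" "steinhaus m u i j = x" by auto
      obtain a b where fab: "f (i,j) = (a,b)" by force
      have ab: "a + b < n" "a = i" using fr[OF h(1)] fab by auto
      have "f (a, b) = (i, j)" using ff[OF h(1)] fab by simp
      then have "nabla m u a b = x" using key[OF ab(1)] h(2) ab(2) by simp
      then show "f p \<in> {(i, j). i + j < n \<and> nabla m u i j = x}" using p fab ab by simp
    qed
  qed
  then show ?thesis unfolding occ_def by (rule bij_betw_same_card)
qed

theorem corollary1: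
  fixes m n :: nat and u :: "nat \<Rightarrow> int"
  assumes "\<forall>j<n. u j \<in> residues m"
    and "antisymmetric m n u"
  shows "balanced m n (steinhaus m u) \<longleftrightarrow> balanced m n (nabla m u)"
  unfolding balanced_def using occ_eq[OF assms(2)] by simp

end
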